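(* Let $e,e',\hat e$ be events of a branching process of a parallel composition $\mathbf{A}=\mathcal{A}_1\parallel\cdots\parallel\mathcal{A}_n$ of labelled transition systems. If $e'\ll e$ and $\hat e$ is concurrent with both $e'$ and $e$, then $([e]\setminus[e'])\cap[\hat e]=\emptyset$.
   Context: A labelled transition system is $\mathcal{A}=(\Sigma,S,T,\lambda,s^0)$ with $T\subseteq S\times S$, $\lambda:T\to\Sigma$. For $\mathcal{A}_j=(\Sigma_j,S_j,T_j,\lambda_j,s^0_j)$, the parallel composition has global states in $S_1\times\cdots\times S_n$, initial state $(s^0_1,\dots,s^0_n)$, and global transitions $\mathbf{t}=(t_1,\dots,t_n)\ne(\star,\dots,\star)$ with label $a$, where $t_j$ is an $a$-transition of $\mathcal{A}_j$ if $a\in\Sigma_j$ and $t_j=\star$ otherwise; ${}^\bullet\mathbf{t}$ / $\mathbf{t}^\bullet$ are the source / target states of the $t_j\ne\star$. Branching processes of $\mathbf{A}$ are Petri nets with conditions labelled by local states and events labelled by global transitions, defined inductively: the net with conditions $b^0_1,\dots,b^0_n$ labelled $s^0_1,\dots,s^0_n$ and no events is one; if a reachable marking contains a set $M$ of conditions labelled exactly by ${}^\bullet\mathbf{t}$ and no event labelled $\mathbf{t}$ has input set $M$, adding an event labelled $\mathbf{t}$ with inputs $M$ and fresh outputs labelled by the states of $\mathbf{t}^\bullet$ gives a branching process; general branching processes are unions of such. For nodes $x,y$: $x<y$ if there is a nonempty directed arc path from $x$ to $y$; $x$ and $y$ are in conflict if there is a condition $z$ different from both from which both are reachable via paths leaving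 $z$ by different arcs; $x,y$ are concurrent if neither $x\le y$, nor $y\le x$, nor in conflict. $[e]=\{e':e'\le e\}$; $M(e)$ is the marking reached by firing exactly the events of $[e]$ from the initial marking. $e'\ll e$ (strong cause) means $e'<e$ and $b'<b$ for all $b\in M(e)\setminus M(e')$, $b'\in M(e')\setminus M(e)$. *)

theory Defs
  imports Main "HOL-Library.FSet"
begin

record ('a, 's) lts =
  alph  :: "'a set"
  states :: "'s set"
  trans :: "('s \<times> 's) set"
  lab   :: "'s \<times> 's \<Rightarrow> 'a"
  init  :: "'s"

definition wf_lts :: "('a, 's) lts \<Rightarrow> bool" where
  "wf_lts L \<longleftrightarrow> trans L \<subseteq> states L \<times> states L \<and> init L \<in> states L
      \<and> (\<forall>t \<in> trans L. lab L t \<in> alph L)"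

text \<open>A global transition of A_0 || ... || A_(n-1) is represented as a function
  from component indices to optional local transitions (None = star).\<close>
type_synonym 's gtrans = "nat \<Rightarrow> ('s \<times> 's) option"

definition is_gtrans :: "(nat \<Rightarrow> ('a, 's) lts) \<Rightarrow> nat \<Rightarrow> 's gtrans \<Rightarrow> 'a \<Rightarrow> bool" where
  "is_gtrans A n t a \<longleftrightarrow>
     (\<forall>j. n \<le> j \<longrightarrow> t j = None) \<and> (\<exists>j<n. t j \<noteq> None) \<and>
     (\<forall>j<n. (a \<in> alph (A j) \<longrightarrow> (\<exists>tr. t j = Some tr \<and> tr \<in> trans (A j) \<and> lab (A j) tr = a))
           \<and> (a \<notin> alph (A j) \<longrightarrow> t j = None))"

definition gtrans_set :: "(nat \<Rightarrow> ('a, 's) lts) \<Rightarrow> nat \<Rightarrow> 's gtrans set" where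
  "gtrans_set A n = {t. \<exists>a. is_gtrans A n t a}"

definition gpre :: "nat \<Rightarrow> 's gtrans \<Rightarrow> (nat \<times> 's) set" where
  "gpre n t = {(j, fst tr) | j tr. j < n \<and> t j = Some tr}"

text \<open>A condition is named by its label (component index, local state) and its
  unique input event (None for initial conditions); an event is named by its
  label (a global transition) and its set of input conditions.\<close>
datatype 's cnd = Cnd (cnd_comp: nat) (cnd_state: 's) (cnd_pre: "'s evt option")
     and 's evt = Evt (evt_lab: "'s gtrans") (evt_pre: "'s cnd fset")

datatype 's node = NC "'s cnd" | NE "'s evt"

definition clab :: "'s cnd \<Rightarrow> nat \<times> 's" where
  "clab b = (cnd_comp b, cnd_state b)"

definition init_conds :: "(nat \<Rightarrow> ('a, 's) lts) \<Rightarrow> nat \<Rightarrow> 's cnd set" where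
  "init_conds A n = {Cnd j (init (A j)) None | j. j < n}"

definition inputs :: "'s evt \<Rightarrow> 's cnd set" where
  "inputs e = fset (evt_pre e)"

definition outputs :: "nat \<Rightarrow> 's evt \<Rightarrow> 's cnd set" where
  "outputs n e = {Cnd j (snd tr) (Some e) | j tr. j < n \<and> evt_lab e j = Some tr}"

inductive_set reach_marks :: "(nat \<Rightarrow> ('a, 's) lts) \<Rightarrow> nat \<Rightarrow> 's evt set \<Rightarrow> 's cnd set set"
  for A n E where
  init_mark: "init_conds A n \<in> reach_marks A n E"
| fire: "Mk \<in> reach_marks A n E \<Longrightarrow> e \<in> E \<Longrightarrow> inputs e \<subseteq> Mk \<Longrightarrow>
         (Mk - inputs e) \<union> outputs n e \<in> reach_marks A n E"

inductive_set fin_bp :: "(nat \<Rightarrow> ('a, 's) lts) \<Rightarrow> nat \<Rightarrow> 's evt set set"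
  for A n where
  empty: "{} \<in> fin_bp A n"
| extend: "E \<in> fin_bp A n \<Longrightarrow> Mk \<in> reach_marks A n E \<Longrightarrow> fset M \<subseteq> Mk \<Longrightarrow>
           t \<in> gtrans_set A n \<Longrightarrow> inj_on clab (fset M) \<Longrightarrow> clab ` fset M = gpre n t \<Longrightarrow>
           Evt t M \<notin> E \<Longrightarrow> insert (Evt t M) E \<in> fin_bp A n"

definition branching_process :: "(nat \<Rightarrow> ('a, 's) lts) \<Rightarrow> nat \<Rightarrow> 's evt set \<Rightarrow> bool" where
  "branching_process A n E \<longleftrightarrow> (\<exists>F. F \<subseteq> fin_bp A n \<and> E = \<Union>F)"

definition conds :: "(nat \<Rightarrow> ('a, 's) lts) \<Rightarrow> nat \<Rightarrow> 's evt set \<Rightarrow> 's cnd set" where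
  "conds A n E = init_conds A n \<union> (\<Union>e\<in>E. outputs n e)"

definition arcs :: "nat \<Rightarrow> 's evt set \<Rightarrow> ('s node \<times> 's node) set" where
  "arcs n E = {(NC b, NE e) | b e. e \<in> E \<and> b \<in> inputs e}
            \<union> {(NE e, NC b) | b e. e \<in> E \<and> b \<in> outputs n e}"

definition nlt :: "nat \<Rightarrow> 's evt set \<Rightarrow> 's node \<Rightarrow> 's node \<Rightarrow> bool" where
  "nlt n E x y \<longleftrightarrow> (x, y) \<in> (arcs n E)\<^sup>+"

definition nle :: "nat \<Rightarrow> 's evt set \<Rightarrow> 's node \<Rightarrow> 's node \<Rightarrow> bool" where
  "nle n E x y \<longleftrightarrow> (x, y) \<in> (arcs n E)\<^sup>*"

definition conflict :: "(nat \<Rightarrow> ('a, 's) lts) \<Rightarrow> nat \<Rightarrow> 's evt set \<Rightarrow> 's node \<Rightarrow> 's node \<Rightarrow> bool" where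
  "conflict A n E x y \<longleftrightarrow>
     (\<exists>z \<in> conds A n E. NC z \<noteq> x \<and> NC z \<noteq> y \<and>
        (\<exists>e1 e2. e1 \<noteq> e2 \<and> (NC z, NE e1) \<in> arcs n E \<and> (NC z, NE e2) \<in> arcs n E \<and>
                 nle n E (NE e1) x \<and> nle n E (NE e2) y))"

definition concurrent :: "(nat \<Rightarrow> ('a, 's) lts) \<Rightarrow> nat \<Rightarrow> 's evt set \<Rightarrow> 's node \<Rightarrow> 's node \<Rightarrow> bool" where
  "concurrent A n E x y \<longleftrightarrow> \<not> nle n E x y \<and> \<not> nle n E y x \<and> \<not> conflict A n E x y"

definition lconf :: "nat \<Rightarrow> 's evt set \<Rightarrow> 's evt \<Rightarrow> 's evt set" where
  "lconf n E e = {e' \<in> E. nle n E (NE e') (NE e)}"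

text \<open>M(e): marking reached by firing exactly the events of [e] from the initial marking
  (standard formula (Min(N) \<union> [e]\<bullet>) - \<bullet>[e]).\<close>
definition mark :: "(nat \<Rightarrow> ('a, 's) lts) \<Rightarrow> nat \<Rightarrow> 's evt set \<Rightarrow> 's evt \<Rightarrow> 's cnd set" where
  "mark A n E e = (init_conds A n \<union> (\<Union>f\<in>lconf n E e. outputs n f))
                   - (\<Union>f\<in>lconf n E e. inputs f)"

definition strong_cause :: "(nat \<Rightarrow> ('a, 's) lts) \<Rightarrow> nat \<Rightarrow> 's evt set \<Rightarrow> 's evt \<Rightarrow> 's evt \<Rightarrow> bool" where
  "strong_cause A n E e' e \<longleftrightarrow> nlt n E (NE e') (NE e) \<and>
     (\<forall>b \<in> mark A n E e - mark A n E e'. \<forall>b' \<in> mark A n E e' - mark A n E e.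
        nlt n E (NC b') (NC b))"

end

theory Submission
  imports Defs
begin

lemma size_in_evt: "b |\<in>| M \<Longrightarrow> size b < size (Evt t M)"
  apply simp
  apply (subgoal_tac "Suc (size b) \<le> (\<Sum>x\<in>fset M. Suc (size x))")
   apply simp
  apply (rule member_le_sum[where f="\<lambda>x. Suc (size x)", simplified])
  by auto

fun nsize :: "'s node \<Rightarrow> nat" where
  "nsize (NC b) = size b" | "nsize (NE e) = size e"

lemma arcs_size: "(x, y) \<in> arcs n E \<Longrightarrow> nsize x < nsize y"
proof -
  assume "(x, y) \<in> arcs n E"
  then consider (a) b e where "x = NC b" "y = NE e" "b \<in> inputs e"
    | (b) b e where "x = NE e" "y = NC b" "b \<in> outputs n e"
    unfolding arcs_def by blast
  then show ?thesis
  proof cases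
    case a
    then show ?thesis using size_in_evt[of b "evt_pre e" "evt_lab e"]
      by (cases e) (auto simp: inputs_def)
  next
    case b
    then show ?thesis by (auto simp: outputs_def)
  qed
qed

lemma trancl_size: "(x, y) \<in> (arcs n E)\<^sup>+ \<Longrightarrow> nsize x < nsize y"
  by (induction rule: trancl_induct) (auto dest: arcs_size)

lemma acyclic_arcs: "(x, x) \<notin> (arcs n E)\<^sup>+"
  using trancl_size by blast

definition R :: "nat \<Rightarrow> 's evt set \<Rightarrow> ('s evt \<times> 's evt) set" where
  "R n E = {(g, g2). \<exists>d. d \<in> outputs n g \<and> d \<in> inputs g2 \<and> g \<in> E \<and> g2 \<in> E}"

lemma nle_R_aux:
  assumes "(NE g, y) \<in> (arcs n E)\<^sup>*"
  shows "(\<forall>h. y = NE h \<longrightarrow> (g, h) \<in> (R n E)\<^sup>*) \<and>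
         (\<forall>c. y = NC c \<longrightarrow> (\<exists>g'. (g, g') \<in> (R n E)\<^sup>* \<and> c \<in> outputs n g' \<and> g' \<in> E))"
  using assms
proof (induction rule: rtrancl_induct)
  case base
  then show ?case by auto
next
  case (step y z)
  from step.hyps(2) consider (a) b e where "y = NC b" "z = NE e" "b \<in> inputs e" "e \<in> E"
    | (b) b e where "y = NE e" "z = NC b" "b \<in> outputs n e" "e \<in> E"
    unfolding arcs_def by blast
  then show ?case
  proof cases
    case a
    with step.IH obtain g' where "(g, g') \<in> (R n E)\<^sup>*" "b \<in> outputs n g'" "g' \<in> E" by auto
    then have "(g, e) \<in> (R n E)\<^sup>*" using a
    proof -
      have "(g', e) \<in> R n E" unfolding R_def using a \<open>b \<in> outputs n g'\<close> \<open>g' \<in> E\<close> by blast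
      then show ?thesis using \<open>(g, g') \<in> (R n E)\<^sup>*\<close> by (rule rtrancl.rtrancl_into_rtrancl[rotated])
    qed
    then show ?thesis using a by simp
  next
    case b
    then show ?thesis using step.IH by auto
  qed
qed

lemma nle_R: "nle n E (NE g) (NE h) \<Longrightarrow> (g, h) \<in> (R n E)\<^sup>*"
  using nle_R_aux[of g "NE h" n E] unfolding nle_def by simp

lemma R_nle: "(g, h) \<in> (R n E)\<^sup>* \<Longrightarrow> nle n E (NE g) (NE h)"
  unfolding nle_def
proof (induction rule: rtrancl_induct)
  case base
  then show ?case by simp
next
  case (step y z)
  then obtain d where d: "d \<in> outputs n y" "d \<in> inputs z" "z \<in> E" unfolding R_def by auto
  have "(NE y, NC d) \<in> arcs n E" "(NC d, NE z) \<in> arcs n E"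
    using d step.hyps(2) unfolding arcs_def R_def by auto
  then show ?case using step.IH by (meson rtrancl.rtrancl_into_rtrancl)
qed

lemma exit_step:
  assumes "(a, b) \<in> r\<^sup>*" "P a" "\<not> P b"
  shows "\<exists>x y. (a, x) \<in> r\<^sup>* \<and> P x \<and> \<not> P y \<and> (x, y) \<in> r \<and> (y, b) \<in> r\<^sup>*"
  using assms
proof (induction rule: converse_rtrancl_induct)
  case base
  then show ?case by simp
next
  case (step a z)
  show ?case
  proof (cases "P z")
    case True
    then obtain x y where "(z, x) \<in> r\<^sup>*" "P x" "\<not> P y" "(x, y) \<in> r" "(y, b) \<in> r\<^sup>*"
      using step.IH step.prems by blast
    then show ?thesis using step.hyps(1)
      by (meson converse_rtrancl_into_rtrancl)
  next
    case False
    then show ?thesis using step by blast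
  qed
qed

theorem lemma2:
  fixes A :: "nat \<Rightarrow> ('a, 's) lts" and n :: nat and E :: "'s evt set"
    and e e' eh :: "'s evt"
  assumes "\<forall>j<n. wf_lts (A j)"
    and "branching_process A n E"
    and "e \<in> E" and "e' \<in> E" and "eh \<in> E"
    and "strong_cause A n E e' e"
    and "concurrent A n E (NE eh) (NE e')"
    and "concurrent A n E (NE eh) (NE e)"
  shows "(lconf n E e - lconf n E e') \<inter> lconf n E eh = {}"
proof (rule ccontr)
  assume "(lconf n E e - lconf n E e') \<inter> lconf n E eh \<noteq> {}"
  then obtain f where f: "f \<in> lconf n E e" "f \<notin> lconf n E e'" "f \<in> lconf n E eh" by blast
  have fE: "f \<in> E" using f unfolding lconf_def by auto
  have c1: "\<not> nle n E (NE eh) (NE e)" "\<not> nle n E (NE e') (NE eh)"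
    "\<not> conflict A n E (NE eh) (NE e)"
    using assms(7,8) unfolding concurrent_def by auto
  have "(f, eh) \<in> (R n E)\<^sup>*" using f(3) nle_R unfolding lconf_def by blast
  moreover have "eh \<notin> lconf n E e" using c1(1) unfolding lconf_def by auto
  ultimately obtain x y where xy: "(f, x) \<in> (R n E)\<^sup>*" "x \<in> lconf n E e" "y \<notin> lconf n E e"
    "(x, y) \<in> R n E" "(y, eh) \<in> (R n E)\<^sup>*"
    using exit_step[of f eh "R n E" "\<lambda>g. g \<in> lconf n E e"] f(1) by blast
  from xy(4) obtain d where d: "d \<in> outputs n x" "d \<in> inputs y" "x \<in> E" "y \<in> E"
    unfolding R_def by auto
  have yeh: "nle n E (NE y) (NE eh)" using R_nle xy(5) by blast
  have dpre: "cnd_pre d = Some x" using d(1) unfolding outputs_def by auto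
  have dMe: "d \<in> mark A n E e"
  proof -
    have "d \<notin> inputs h" if h: "h \<in> lconf n E e" for h
    proof
      assume dh: "d \<in> inputs h"
      have hy: "h \<noteq> y" using h xy(3) by auto
      have hE: "h \<in> E" and he: "nle n E (NE h) (NE e)" using h unfolding lconf_def by auto
      have "conflict A n E (NE eh) (NE e)"
        unfolding conflict_def
      proof (rule bexI[of _ d], intro conjI exI)
        show "NC d \<noteq> NE eh" "NC d \<noteq> NE e" by auto
        show "y \<noteq> h" using hy by simp
        show "(NC d, NE y) \<in> arcs n E" using d unfolding arcs_def by auto
        show "(NC d, NE h) \<in> arcs n E" using dh hE unfolding arcs_def by auto
        show "nle n E (NE y) (NE eh)" by (rule yeh)
        show "nle n E (NE h) (NE e)" by (rule he)
        show "d \<in> conds A n E" using d unfolding conds_def by auto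
      qed
      then show False using c1(3) by simp
    qed
    then show ?thesis using xy(2) d(1) unfolding mark_def by auto
  qed
  have dMe': "d \<notin> mark A n E e'"
  proof
    assume "d \<in> mark A n E e'"
    then have "d \<in> init_conds A n \<or> (\<exists>g \<in> lconf n E e'. d \<in> outputs n g)"
      unfolding mark_def by auto
    moreover have "d \<notin> init_conds A n" using dpre unfolding init_conds_def by auto
    ultimately obtain g where g: "g \<in> lconf n E e'" "d \<in> outputs n g" by auto
    then have "g = x" using dpre unfolding outputs_def by auto
    then have "nle n E (NE x) (NE e')" using g unfolding lconf_def by auto
    moreover have "nle n E (NE f) (NE x)" using R_nle xy(1) by blast
    ultimately have "nle n E (NE f) (NE e')" unfolding nle_def by simp
    then show False using f(2) fE unfolding lconf_def by auto
  qed
  have "nlt n E (NE e') (NE e)" using assms(6) unfolding strong_cause_def by auto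
  then have "(NE e', NE e) \<in> (arcs n E)\<^sup>+" unfolding nlt_def .
  then obtain z where z1: "(NE e', z) \<in> arcs n E" "(z, NE e) \<in> (arcs n E)\<^sup>+"
  proof (rule converse_tranclE)
    assume "(NE e', NE e) \<in> arcs n E"
    then show ?thesis unfolding arcs_def by auto
  next
    fix w assume "(NE e', w) \<in> arcs n E" "(w, NE e) \<in> (arcs n E)\<^sup>+"
    then show ?thesis using that by blast
  qed
  then obtain c where zc: "z = NC c" "c \<in> outputs n e'" unfolding arcs_def by auto
  have "\<exists>g. g \<in> E \<and> c \<in> inputs g \<and> nle n E (NE g) (NE e)"
    using z1(2) unfolding zc(1)
  proof (rule converse_tranclE)
    assume "(NC c, NE e) \<in> arcs n E"
    then show ?thesis unfolding arcs_def nle_def by auto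
  next
    fix w assume "(NC c, w) \<in> arcs n E" "(w, NE e) \<in> (arcs n E)\<^sup>+"
    then show ?thesis unfolding arcs_def nle_def by (auto dest: trancl_into_rtrancl)
  qed
  then obtain g where g: "g \<in> E" "c \<in> inputs g" "nle n E (NE g) (NE e)" by blast
  have cMe: "c \<notin> mark A n E e" using g unfolding mark_def lconf_def by auto
  have e'l: "e' \<in> lconf n E e'" using assms(4) unfolding lconf_def nle_def by auto
  have cMe': "c \<in> mark A n E e'"
  proof -
    have "c \<notin> inputs h" if h: "h \<in> lconf n E e'" for h
    proof
      assume ch: "c \<in> inputs h"
      have "(NE e', NC c) \<in> arcs n E" using zc assms(4) unfolding arcs_def by auto
      moreover have "(NC c, NE h) \<in> arcs n E" using ch h unfolding arcs_def lconf_def by auto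
      moreover have "(NE h, NE e') \<in> (arcs n E)\<^sup>*" using h unfolding lconf_def nle_def by auto
      ultimately have "(NE e', NE e') \<in> (arcs n E)\<^sup>+" by auto
      then show False using acyclic_arcs by blast
    qed
    then show ?thesis using e'l zc(2) unfolding mark_def by auto
  qed
  have "nlt n E (NC c) (NC d)"
    using assms(6) dMe dMe' cMe cMe' unfolding strong_cause_def by blast
  then have "(NC c, NC d) \<in> (arcs n E)\<^sup>*" unfolding nlt_def by auto
  moreover have "(NE e', NC c) \<in> arcs n E" using zc assms(4) unfolding arcs_def by auto
  moreover have "(NC d, NE y) \<in> arcs n E" using d unfolding arcs_def by auto
  moreover have "(NE y, NE eh) \<in> (arcs n E)\<^sup>*" using yeh unfolding nle_def .
  ultimately have "(NE e', NE eh) \<in> (arcs n E)\<^sup>*" by (meson converse_rtrancl_into_rtrancl rtrancl_trans)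
  then show False using c1(2) unfolding nle_def by simp
qed

end
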